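(* For all positive integers $t,s$, the complete bipartite graph $K_{4t,4s+2}$ has an almost 2-perfect 8-cycle decomposition.
   Context: An 8-cycle decomposition of a graph $G$ is a collection of pairwise edge-disjoint 8-cycles in $G$ whose edge sets partition $E(G)$. For an 8-cycle $C$, an inside 8-cycle of $C$ is an 8-cycle on the same vertex set as $C$ sharing no edge with $C$. An 8-cycle decomposition $\mathcal{C}$ of $G$ is almost 2-perfect (A2P) if one can choose, for each $C\in\mathcal{C}$, an inside 8-cycle $C'$ of $C$ with all edges in $G$, such that the chosen cycles $\{C'\}$ again form an 8-cycle decomposition of $G$. *)

theory Defs
  imports Main
begin

(* Graphs are given by their edge sets; an edge is a 2-element set of vertices. *)

definition cycle_edges :: "'a list \<Rightarrow> 'a set set" where
  "cycle_edges vs = {{vs ! i, vs ! ((i + 1) mod length vs)} | i. i < length vs}"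

definition is_8cycle :: "'a set set \<Rightarrow> bool" where
  "is_8cycle C \<longleftrightarrow> (\<exists>vs. length vs = 8 \<and> distinct vs \<and> C = cycle_edges vs)"

definition cyc_verts :: "'a set set \<Rightarrow> 'a set" where
  "cyc_verts C = \<Union>C"

definition is_8cycle_decomp :: "'a set set \<Rightarrow> 'a set set set \<Rightarrow> bool" where
  "is_8cycle_decomp E \<C> \<longleftrightarrow>
     (\<forall>C\<in>\<C>. is_8cycle C \<and> C \<subseteq> E) \<and>
     (\<forall>C\<in>\<C>. \<forall>D\<in>\<C>. C \<noteq> D \<longrightarrow> C \<inter> D = {}) \<and>
     \<Union>\<C> = E"

definition inside_8cycle :: "'a set set \<Rightarrow> 'a set set \<Rightarrow> bool" where
  "inside_8cycle C C' \<longleftrightarrow> is_8cycle C' \<and> cyc_verts C' = cyc_verts C \<and> C \<inter> C' = {}"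

definition is_A2P_8cycle_decomp :: "'a set set \<Rightarrow> 'a set set set \<Rightarrow> bool" where
  "is_A2P_8cycle_decomp E \<C> \<longleftrightarrow>
     is_8cycle_decomp E \<C> \<and>
     (\<exists>f. (\<forall>C\<in>\<C>. inside_8cycle C (f C) \<and> f C \<subseteq> E) \<and>
          (\<forall>C\<in>\<C>. \<forall>D\<in>\<C>. C \<noteq> D \<longrightarrow> f C \<inter> f D = {}) \<and>
          \<Union>(f ` \<C>) = E)"

definition complete_bipartite :: "nat \<Rightarrow> nat \<Rightarrow> (nat + nat) set set" where
  "complete_bipartite m n = {{Inl i, Inr j} | i j. i < m \<and> j < n}"

end

theory Submission imports Defs begin
lemma lt8: "{i::nat. i < 8} = {0,1,2,3,4,5,6,7}" by auto
lemma cycle_edges8: "cycle_edges [v0,v1,v2,v3,v4,v5,v6,v7] = {{v0,v1},{v1,v2},{v2,v3},{v3,v4},{v4,v5},{v5,v6},{v6,v7},{v7,v0}}"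
proof -
  have "cycle_edges [v0,v1,v2,v3,v4,v5,v6,v7] = (\<lambda>i. {[v0,v1,v2,v3,v4,v5,v6,v7] ! i, [v0,v1,v2,v3,v4,v5,v6,v7] ! ((i + 1) mod 8)}) ` {i. i < 8}"
    unfolding cycle_edges_def by auto
  also have "\<dots> = {{v0,v1},{v1,v2},{v2,v3},{v3,v4},{v4,v5},{v5,v6},{v6,v7},{v7,v0}}"
    unfolding lt8 image_insert image_empty by simp
  finally show ?thesis .
qed
definition ed :: "nat \<Rightarrow> nat \<Rightarrow> (nat+nat) set" where "ed i j = {Inl i, Inr j}"
definition EP :: "(nat \<times> nat) set \<Rightarrow> (nat+nat) set set" where "EP P = (\<lambda>(i,j). ed i j) ` P"

lemma ed_inj: "ed i j = ed i' j' \<longleftrightarrow> i=i' \<and> j=j'" by (auto simp: ed_def doubleton_eq_iff)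
lemma inj_ed: "inj (\<lambda>(i,j). ed i j)" by (auto simp: inj_def ed_inj)
lemma EP_Int: "EP P \<inter> EP Q = EP (P \<inter> Q)"
  unfolding EP_def by (simp add: image_Int[OF inj_ed])
lemma EP_Un: "EP P \<union> EP Q = EP (P \<union> Q)" unfolding EP_def by auto
lemma EP_sub: "EP P \<subseteq> EP Q \<longleftrightarrow> P \<subseteq> Q" unfolding EP_def by (simp add: inj_image_subset_iff[OF inj_ed])
lemma EP_eq: "EP P = EP Q \<longleftrightarrow> P = Q" unfolding EP_def by (simp add: inj_image_eq_iff[OF inj_ed])
lemma EP_empty: "EP P = {} \<longleftrightarrow> P = {}" unfolding EP_def by simp
lemma verts_EP: "cyc_verts (EP P) = Inl ` fst ` P \<union> Inr ` snd ` P"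
  unfolding cyc_verts_def EP_def ed_def by force

lemma cyc_bip: "cycle_edges [Inl a0, Inr b0, Inl a1, Inr b1, Inl a2, Inr b2, Inl a3, Inr b3] = EP {(a0,b0),(a1,b0),(a1,b1),(a2,b1),(a2,b2),(a3,b2),(a3,b3),(a0,b3)}"
  unfolding cycle_edges8 EP_def ed_def by (simp add: insert_commute)

lemma is8_bip: "distinct [a0,a1,a2,a3] \<Longrightarrow> distinct [b0,b1,b2,b3] \<Longrightarrow> is_8cycle (EP {(a0,b0),(a1,b0),(a1,b1),(a2,b1),(a2,b2),(a3,b2),(a3,b3),(a0,b3)})"
  unfolding is_8cycle_def
  apply (rule exI[of _ "[Inl a0, Inr b0, Inl a1, Inr b1, Inl a2, Inr b2, Inl a3, Inr b3]"])
  by (simp add: cyc_bip)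

lemma KB: "complete_bipartite m n = EP ({..<m} \<times> {..<n})"
  unfolding complete_bipartite_def EP_def ed_def by auto

lemma cyc_ne: "is_8cycle C \<Longrightarrow> C \<noteq> {}"
  unfolding is_8cycle_def cycle_edges_def by force
lemma A2P2:
  assumes a1: "is_8cycle c1" and a2: "is_8cycle c2" and i: "c1 \<inter> c2 = {}" and u: "c1 \<union> c2 = E"
    and v: "cyc_verts c1 = cyc_verts c2"
  shows "is_A2P_8cycle_decomp E {c1,c2}"
proof -
  have ne: "c1 \<noteq> c2" using a1 i cyc_ne by blast
  have i': "c2 \<inter> c1 = {}" using i by blast
  have s: "c1 \<subseteq> E" "c2 \<subseteq> E" using u by blast+
  define f where "f C = (if C = c1 then c2 else c1)" for C
  have f: "f c1 = c2" "f c2 = c1" using ne by (auto simp: f_def)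
  show ?thesis
    unfolding is_A2P_8cycle_decomp_def is_8cycle_decomp_def
  proof (intro conjI exI[of _ f])
    show "\<forall>C\<in>{c1, c2}. is_8cycle C \<and> C \<subseteq> E" using a1 a2 s by simp
    show "\<forall>C\<in>{c1, c2}. \<forall>D\<in>{c1, c2}. C \<noteq> D \<longrightarrow> C \<inter> D = {}" using i i' by simp
    show "\<Union> {c1, c2} = E" using u by simp
    show "\<forall>C\<in>{c1, c2}. inside_8cycle C (f C) \<and> f C \<subseteq> E"
      using a1 a2 s i i' v unfolding inside_8cycle_def by (simp add: f)
    show "\<forall>C\<in>{c1, c2}. \<forall>D\<in>{c1, c2}. C \<noteq> D \<longrightarrow> f C \<inter> f D = {}" using i i' by (simp add: f)
    show "\<Union> (f ` {c1, c2}) = E" using u by (auto simp: f)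
  qed
qed

lemma A2P3:
  assumes a1: "is_8cycle c1" and a2: "is_8cycle c2" and a3: "is_8cycle c3"
    and i12: "c1 \<inter> c2 = {}" and i13: "c1 \<inter> c3 = {}" and i23: "c2 \<inter> c3 = {}" and u: "c1 \<union> c2 \<union> c3 = E"
    and b1: "is_8cycle fa" and b2: "is_8cycle fb" and b3: "is_8cycle fc"
    and j12: "fa \<inter> fb = {}" and j13: "fa \<inter> fc = {}" and j23: "fb \<inter> fc = {}" and u': "fa \<union> fb \<union> fc = E"
    and v1: "cyc_verts fa = cyc_verts c1" and v2: "cyc_verts fb = cyc_verts c2" and v3: "cyc_verts fc = cyc_verts c3"
    and k1: "c1 \<inter> fa = {}" and k2: "c2 \<inter> fb = {}" and k3: "c3 \<inter> fc = {}"
  shows "is_A2P_8cycle_decomp E {c1,c2,c3}"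
proof -
  have ne: "c1 \<noteq> c2" "c1 \<noteq> c3" "c2 \<noteq> c3" using a1 a2 i12 i13 i23 cyc_ne by blast+
  have i': "c2 \<inter> c1 = {}" "c3 \<inter> c1 = {}" "c3 \<inter> c2 = {}" using i12 i13 i23 by blast+
  have j': "fb \<inter> fa = {}" "fc \<inter> fa = {}" "fc \<inter> fb = {}" using j12 j13 j23 by blast+
  have s: "c1 \<subseteq> E" "c2 \<subseteq> E" "c3 \<subseteq> E" using u by blast+
  have s': "fa \<subseteq> E" "fb \<subseteq> E" "fc \<subseteq> E" using u' by blast+
  define f where "f C = (if C = c1 then fa else if C = c2 then fb else fc)" for C
  have f: "f c1 = fa" "f c2 = fb" "f c3 = fc" using ne by (auto simp: f_def)
  show ?thesis
    unfolding is_A2P_8cycle_decomp_def is_8cycle_decomp_def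
  proof (intro conjI exI[of _ f])
    show "\<forall>C\<in>{c1, c2, c3}. is_8cycle C \<and> C \<subseteq> E" using a1 a2 a3 s by simp
    show "\<forall>C\<in>{c1, c2, c3}. \<forall>D\<in>{c1, c2, c3}. C \<noteq> D \<longrightarrow> C \<inter> D = {}" using i12 i13 i23 i' by simp
    show "\<Union> {c1, c2, c3} = E" using u by (simp add: Un_assoc)
    show "\<forall>C\<in>{c1, c2, c3}. inside_8cycle C (f C) \<and> f C \<subseteq> E"
      using b1 b2 b3 s' v1 v2 v3 k1 k2 k3 unfolding inside_8cycle_def by (simp add: f)
    show "\<forall>C\<in>{c1, c2, c3}. \<forall>D\<in>{c1, c2, c3}. C \<noteq> D \<longrightarrow> f C \<inter> f D = {}"
      using j12 j13 j23 j' by (simp add: f)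
    show "\<Union> (f ` {c1, c2, c3}) = E" using u' by (simp add: f Un_assoc)
  qed
qed

lemma l4: "{..<4::nat} = {0,1,2,3}" by auto
lemma l6: "{..<6::nat} = {0,1,2,3,4,5}" by auto
lemma fin_eq: "A \<subseteq> X \<times> Y \<Longrightarrow> (\<forall>a\<in>X. \<forall>b\<in>Y. (a,b) \<in> A) \<Longrightarrow> A = X \<times> Y" by auto
lemma verts_eq: "fst ` P \<subseteq> fst ` Q \<Longrightarrow> fst ` Q \<subseteq> fst ` P \<Longrightarrow> snd ` P \<subseteq> snd ` Q \<Longrightarrow> snd ` Q \<subseteq> snd ` P
   \<Longrightarrow> cyc_verts (EP P) = cyc_verts (EP Q)"
  unfolding verts_EP by (metis subset_antisym)

lemma K44: "is_A2P_8cycle_decomp (complete_bipartite 4 4)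
   {EP {(0,0),(1,0),(1,1),(2,1),(2,2),(3,2),(3,3),(0,3)}, EP {(0,1),(3,1),(3,0),(2,0),(2,3),(1,3),(1,2),(0,2)}}"
proof (rule A2P2)
  show "is_8cycle (EP {(0,0),(1,0),(1,1),(2,1),(2,2),(3,2),(3,3),(0,3)})"
    using is8_bip[of 0 1 2 3 0 1 2 3] by simp
  show "is_8cycle (EP {(0,1),(3,1),(3,0),(2,0),(2,3),(1,3),(1,2),(0,2)})"
    using is8_bip[of 0 3 2 1 1 0 3 2] by simp
  show "EP {(0,0),(1,0),(1,1),(2,1),(2,2),(3,2),(3,3),(0,3)} \<inter> EP {(0,1),(3,1),(3,0),(2,0),(2,3),(1,3),(1,2),(0,2)} = {}"
    by (simp add: EP_Int EP_empty)
  show "EP {(0,0),(1,0),(1,1),(2,1),(2,2),(3,2),(3,3),(0,3)} \<union> EP {(0,1),(3,1),(3,0),(2,0),(2,3),(1,3),(1,2),(0,2)} = complete_bipartite 4 4"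
    unfolding EP_Un KB EP_eq l4 by (rule fin_eq) simp_all
  show "cyc_verts (EP {(0,0),(1,0),(1,1),(2,1),(2,2),(3,2),(3,3),(0,3)}) = cyc_verts (EP {(0,1),(3,1),(3,0),(2,0),(2,3),(1,3),(1,2),(0,2)})"
    by (rule verts_eq) simp_all
qed

definition "PC1 = {(0,3),(3,3),(3,2),(2,2),(2,1),(1,1),(1,0),(0,0::nat)}"
definition "PC2 = {(0,1),(3,1),(3,0),(2,0),(2,5),(1,5),(1,4),(0,4::nat)}"
definition "PC3 = {(0,5),(3,5),(3,4),(2,4),(2,3),(1,3),(1,2),(0,2::nat)}"
definition "PF1 = {(0,1),(3,1),(3,0),(2,0),(2,3),(1,3),(1,2),(0,2::nat)}"
definition "PF2 = {(0,5),(3,5),(3,4),(2,4),(2,1),(1,1),(1,0),(0,0::nat)}"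
definition "PF3 = {(0,3),(3,3),(3,2),(2,2),(2,5),(1,5),(1,4),(0,4::nat)}"
lemmas PP = PC1_def PC2_def PC3_def PF1_def PF2_def PF3_def

lemma K46: "is_A2P_8cycle_decomp (complete_bipartite 4 6) {EP PC1, EP PC2, EP PC3}"
proof (rule A2P3[where fa="EP PF1" and fb="EP PF2" and fc="EP PF3"])
  show "is_8cycle (EP PC1)" using is8_bip[of 0 3 2 1 3 2 1 0] by (simp add: PP)
  show "is_8cycle (EP PC2)" using is8_bip[of 0 3 2 1 1 0 5 4] by (simp add: PP)
  show "is_8cycle (EP PC3)" using is8_bip[of 0 3 2 1 5 4 3 2] by (simp add: PP)
  show "is_8cycle (EP PF1)" using is8_bip[of 0 3 2 1 1 0 3 2] by (simp add: PP)
  show "is_8cycle (EP PF2)" using is8_bip[of 0 3 2 1 5 4 1 0] by (simp add: PP)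
  show "is_8cycle (EP PF3)" using is8_bip[of 0 3 2 1 3 2 5 4] by (simp add: PP)
  show "EP PC1 \<inter> EP PC2 = {}" by (simp add: EP_Int EP_empty PP)
  show "EP PC1 \<inter> EP PC3 = {}" by (simp add: EP_Int EP_empty PP)
  show "EP PC2 \<inter> EP PC3 = {}" by (simp add: EP_Int EP_empty PP)
  show "EP PF1 \<inter> EP PF2 = {}" by (simp add: EP_Int EP_empty PP)
  show "EP PF1 \<inter> EP PF3 = {}" by (simp add: EP_Int EP_empty PP)
  show "EP PF2 \<inter> EP PF3 = {}" by (simp add: EP_Int EP_empty PP)
  show "EP PC1 \<inter> EP PF1 = {}" by (simp add: EP_Int EP_empty PP)
  show "EP PC2 \<inter> EP PF2 = {}" by (simp add: EP_Int EP_empty PP)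
  show "EP PC3 \<inter> EP PF3 = {}" by (simp add: EP_Int EP_empty PP)
  show "EP PC1 \<union> EP PC2 \<union> EP PC3 = complete_bipartite 4 6"
    unfolding EP_Un KB EP_eq l4 l6 PP by (rule fin_eq) simp_all
  show "EP PF1 \<union> EP PF2 \<union> EP PF3 = complete_bipartite 4 6"
    unfolding EP_Un KB EP_eq l4 l6 PP by (rule fin_eq) simp_all
  show "cyc_verts (EP PF1) = cyc_verts (EP PC1)" unfolding PP by (rule verts_eq) simp_all
  show "cyc_verts (EP PF2) = cyc_verts (EP PC2)" unfolding PP by (rule verts_eq) simp_all
  show "cyc_verts (EP PF3) = cyc_verts (EP PC3)" unfolding PP by (rule verts_eq) simp_all
qed
lemma cyc_ne2: "is_8cycle C \<Longrightarrow> C \<noteq> {}"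
  unfolding is_8cycle_def cycle_edges_def by force
lemma inj_img: "inj g \<Longrightarrow> inj (image g)" using inj_on_image[of g UNIV] by simp
lemma cycle_edges_alt: "cycle_edges vs = (\<lambda>i. {vs!i, vs!((i+1) mod length vs)}) ` {..<length vs}"
  unfolding cycle_edges_def by auto
lemma cycle_edges_map: "cycle_edges (map g vs) = image (image g) (cycle_edges vs)"
proof -
  have "cycle_edges (map g vs) = (\<lambda>i. {map g vs!i, map g vs!((i+1) mod length vs)}) ` {..<length vs}"
    unfolding cycle_edges_alt by simp
  also have "\<dots> = (\<lambda>i. image g {vs!i, vs!((i+1) mod length vs)}) ` {..<length vs}"
  proof (rule image_cong[OF refl])
    fix i assume "i \<in> {..<length vs}"
    then have il: "i < length vs" by simp
    then have n: "0 < length vs" by linarith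
    have "(i+1) mod length vs < length vs" by (rule mod_less_divisor[OF n])
    note il this
    then show "{map g vs!i, map g vs!((i+1) mod length vs)} = image g {vs!i, vs!((i+1) mod length vs)}"
      by simp
  qed
  also have "\<dots> = image (image g) (cycle_edges vs)" unfolding cycle_edges_alt image_image by simp
  finally show ?thesis .
qed

lemma A2P_map:
  fixes g :: "'a \<Rightarrow> 'b"
  assumes g: "inj g" and A: "is_A2P_8cycle_decomp E Cs"
  shows "is_A2P_8cycle_decomp (image (image g) E) (image (image (image g)) Cs)"
proof -
  define H :: "'a set set \<Rightarrow> 'b set set" where "H = image (image g)"
  have ig: "inj (image g)" using g by (simp add: inj_img)
  have iH: "inj H" unfolding H_def using ig by (simp add: inj_img)
  have cyc: "is_8cycle (H C)" if c8: "is_8cycle C" for C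
  proof -
    obtain vs where "length vs = 8" "distinct vs" "C = cycle_edges vs"
      using c8 unfolding is_8cycle_def by blast
    then show ?thesis unfolding is_8cycle_def H_def
      by (intro exI[of _ "map g vs"]) (simp add: cycle_edges_map distinct_map inj_on_subset[OF g])
  qed
  have ver: "cyc_verts (H C) = g ` cyc_verts C" for C
    unfolding cyc_verts_def H_def by auto
  have Hint: "H C \<inter> H D = H (C \<inter> D)" for C D
    using ig by (simp add: image_Int H_def)
  have Hsub: "H C \<subseteq> H D \<longleftrightarrow> C \<subseteq> D" for C D
    using ig by (simp add: inj_image_subset_iff H_def)
  have Heq: "H C = H D \<longleftrightarrow> C = D" for C D
    using ig by (simp add: inj_image_eq_iff H_def)
  have Hemp: "H C = {} \<longleftrightarrow> C = {}" for C unfolding H_def by simp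
  have Hun: "\<Union>(H ` X) = H (\<Union> X)" for X unfolding H_def by auto
  obtain f where f1: "\<forall>C\<in>Cs. inside_8cycle C (f C) \<and> f C \<subseteq> E"
    and f2: "\<forall>C\<in>Cs. \<forall>D\<in>Cs. C \<noteq> D \<longrightarrow> f C \<inter> f D = {}" and f3: "\<Union>(f ` Cs) = E"
    using A unfolding is_A2P_8cycle_decomp_def by blast
  have d: "\<forall>C\<in>Cs. is_8cycle C \<and> C \<subseteq> E" "\<forall>C\<in>Cs. \<forall>D\<in>Cs. C \<noteq> D \<longrightarrow> C \<inter> D = {}" "\<Union>Cs = E"
    using A unfolding is_A2P_8cycle_decomp_def is_8cycle_decomp_def by auto
  define F where "F = H \<circ> f \<circ> inv H"
  have FH: "F (H C) = H (f C)" for C unfolding F_def using iH by simp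
  show ?thesis
    unfolding is_A2P_8cycle_decomp_def is_8cycle_decomp_def H_def[symmetric]
  proof (intro conjI)
    show "\<forall>C\<in>H ` Cs. is_8cycle C \<and> C \<subseteq> H E" using d(1) cyc Hsub by auto
    show "\<forall>X\<in>H ` Cs. \<forall>Y\<in>H ` Cs. X \<noteq> Y \<longrightarrow> X \<inter> Y = {}"
    proof (intro ballI impI)
      fix X Y assume "X \<in> H ` Cs" "Y \<in> H ` Cs" "X \<noteq> Y"
      then obtain C D where cd: "X = H C" "Y = H D" "C \<in> Cs" "D \<in> Cs" "C \<noteq> D" by blast
      then have "C \<inter> D = {}" using d(2) by blast
      then show "X \<inter> Y = {}" using cd Hint Hemp by simp
    qed
    show "\<Union> (H ` Cs) = H E" using d(3) Hun by simp
    show "\<exists>f. (\<forall>C\<in>H ` Cs. inside_8cycle C (f C) \<and> f C \<subseteq> H E) \<and>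
        (\<forall>C\<in>H ` Cs. \<forall>D\<in>H ` Cs. C \<noteq> D \<longrightarrow> f C \<inter> f D = {}) \<and> \<Union> (f ` H ` Cs) = H E"
    proof (intro exI[of _ F] conjI)
      show "\<forall>X\<in>H ` Cs. inside_8cycle X (F X) \<and> F X \<subseteq> H E"
      proof
        fix X assume "X \<in> H ` Cs"
        then obtain C where c: "X = H C" "C \<in> Cs" by blast
        then have i: "inside_8cycle C (f C)" "f C \<subseteq> E" using f1 by blast+
        then have "is_8cycle (f C)" "cyc_verts (f C) = cyc_verts C" "C \<inter> f C = {}"
          unfolding inside_8cycle_def by blast+
        then have "is_8cycle (H (f C))" "cyc_verts (H (f C)) = cyc_verts (H C)" "H C \<inter> H (f C) = {}"
          using cyc ver Hint Hemp by simp_all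
        then show "inside_8cycle X (F X) \<and> F X \<subseteq> H E"
          unfolding inside_8cycle_def c(1) FH using i(2) Hsub by simp
      qed
      show "\<forall>X\<in>H ` Cs. \<forall>Y\<in>H ` Cs. X \<noteq> Y \<longrightarrow> F X \<inter> F Y = {}"
      proof (intro ballI impI)
        fix X Y assume "X \<in> H ` Cs" "Y \<in> H ` Cs" "X \<noteq> Y"
        then obtain C D where cd: "X = H C" "Y = H D" "C \<in> Cs" "D \<in> Cs" "C \<noteq> D" by blast
        then have "f C \<inter> f D = {}" using f2 by blast
        then show "F X \<inter> F Y = {}" using cd Hint Hemp FH by simp
      qed
      have "F ` H ` Cs = H ` f ` Cs" by (auto simp: FH image_image)
      then have "\<Union> (F ` H ` Cs) = \<Union> (H ` (f ` Cs))" by simp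
      also have "\<dots> = H (\<Union> (f ` Cs))" by (rule Hun)
      finally show "\<Union> (F ` H ` Cs) = H E" using f3 by simp
    qed
  qed
qed

lemma A2P_Union:
  assumes A: "\<forall>k\<in>I. is_A2P_8cycle_decomp (E k) (Cs k)"
    and D: "\<forall>k\<in>I. \<forall>l\<in>I. k \<noteq> l \<longrightarrow> E k \<inter> E l = {}"
  shows "is_A2P_8cycle_decomp (\<Union>k\<in>I. E k) (\<Union>k\<in>I. Cs k)"
proof -
  define P where "P k f \<longleftrightarrow> (\<forall>C\<in>Cs k. inside_8cycle C (f C) \<and> f C \<subseteq> E k) \<and>
          (\<forall>C\<in>Cs k. \<forall>D\<in>Cs k. C \<noteq> D \<longrightarrow> f C \<inter> f D = {}) \<and>
          \<Union>(f ` Cs k) = E k" for k f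
  define Q where "Q k \<longleftrightarrow> (\<forall>C\<in>Cs k. is_8cycle C \<and> C \<subseteq> E k) \<and>
          (\<forall>C\<in>Cs k. \<forall>D\<in>Cs k. C \<noteq> D \<longrightarrow> C \<inter> D = {}) \<and> \<Union>(Cs k) = E k" for k
  have AA: "is_A2P_8cycle_decomp (E k) (Cs k)" if "k \<in> I" for k using A that by blast
  have ex: "\<forall>k\<in>I. \<exists>f. P k f"
  proof
    fix k assume "k \<in> I"
    from AA[OF this] show "\<exists>f. P k f" unfolding is_A2P_8cycle_decomp_def P_def by (rule conjunct2)
  qed
  obtain f where f: "\<forall>k\<in>I. P k (f k)" using bchoice[OF ex] by blast
  have Qk: "Q k" if "k \<in> I" for k
    using AA[OF that] unfolding is_A2P_8cycle_decomp_def is_8cycle_decomp_def Q_def by (rule conjunct1)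
  have Pk: "P k (f k)" if "k \<in> I" for k using f that by blast
  have f1: "inside_8cycle C (f k C)" "f k C \<subseteq> E k" if "k \<in> I" "C \<in> Cs k" for k C
    using Pk[OF that(1)] that(2) unfolding P_def by simp_all
  have f2: "f k C \<inter> f k D = {}" if "k \<in> I" "C \<in> Cs k" "D \<in> Cs k" "C \<noteq> D" for k C D
    using Pk[OF that(1)] that(2-4) unfolding P_def by simp
  have f3: "\<Union>(f k ` Cs k) = E k" if "k \<in> I" for k using Pk[OF that] unfolding P_def by (elim conjE)
  have d1: "is_8cycle C" "C \<subseteq> E k" if "k \<in> I" "C \<in> Cs k" for k C
    using Qk[OF that(1)] that(2) unfolding Q_def by simp_all
  have d2: "C \<inter> D = {}" if "k \<in> I" "C \<in> Cs k" "D \<in> Cs k" "C \<noteq> D" for k C D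
    using Qk[OF that(1)] that(2-4) unfolding Q_def by simp
  have d3: "\<Union>(Cs k) = E k" if "k \<in> I" for k using Qk[OF that] unfolding Q_def by (elim conjE)
  have uniq: "k = l" if "k \<in> I" "l \<in> I" "C \<in> Cs k" "C \<in> Cs l" for k l C
  proof (rule ccontr)
    assume "k \<noteq> l"
    then have "E k \<inter> E l = {}" using D that by blast
    moreover have "C \<subseteq> E k" "C \<subseteq> E l" using d1 that by blast+
    moreover have "C \<noteq> {}" using d1(1)[OF that(1,3)] cyc_ne2 by blast
    ultimately show False by blast
  qed
  define ix where "ix C = (SOME k. k \<in> I \<and> C \<in> Cs k)" for C
  have ix: "ix C = k" if "k \<in> I" "C \<in> Cs k" for k C
    unfolding ix_def by (rule some_equality) (use that uniq in auto)
  define F where "F C = f (ix C) C" for C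
  have FF: "F C = f k C" if "k \<in> I" "C \<in> Cs k" for k C using ix[OF that] F_def by simp
  have disj: "X \<inter> Y = {}" if "X \<subseteq> E k" "Y \<subseteq> E l" "k \<in> I" "l \<in> I" "k \<noteq> l" for X Y k l
    using D that by blast
  show ?thesis
    unfolding is_A2P_8cycle_decomp_def is_8cycle_decomp_def
  proof (intro conjI)
    show "\<forall>C\<in>\<Union> (Cs ` I). is_8cycle C \<and> C \<subseteq> \<Union> (E ` I)"
    proof
      fix C assume "C \<in> \<Union> (Cs ` I)"
      then obtain k where k: "k \<in> I" "C \<in> Cs k" by blast
      have "C \<subseteq> E k" by (rule d1(2)[OF k])
      then have "C \<subseteq> \<Union> (E ` I)" using k(1) by blast
      then show "is_8cycle C \<and> C \<subseteq> \<Union> (E ` I)" using d1(1)[OF k] by simp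
    qed
    show "\<forall>C\<in>\<Union> (Cs ` I). \<forall>Da\<in>\<Union> (Cs ` I). C \<noteq> Da \<longrightarrow> C \<inter> Da = {}"
    proof (intro ballI impI)
      fix C Da assume "C \<in> \<Union> (Cs ` I)" "Da \<in> \<Union> (Cs ` I)" "C \<noteq> Da"
      then obtain k l where kl: "k \<in> I" "l \<in> I" "C \<in> Cs k" "Da \<in> Cs l" by blast
      show "C \<inter> Da = {}"
      proof (cases "k = l")
        case True then show ?thesis using d2 kl \<open>C \<noteq> Da\<close> by blast
      next
        case False then show ?thesis using disj[OF d1(2)[OF kl(1,3)] d1(2)[OF kl(2,4)] kl(1,2)] by blast
      qed
    qed
    have "\<Union> (\<Union> (Cs ` I)) = (\<Union>k\<in>I. \<Union>(Cs k))" by blast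
    also have "\<dots> = (\<Union>k\<in>I. E k)" using d3 by simp
    finally show "\<Union> (\<Union> (Cs ` I)) = \<Union> (E ` I)" .
    show "\<exists>f. (\<forall>C\<in>\<Union> (Cs ` I). inside_8cycle C (f C) \<and> f C \<subseteq> \<Union> (E ` I)) \<and>
        (\<forall>C\<in>\<Union> (Cs ` I). \<forall>D\<in>\<Union> (Cs ` I). C \<noteq> D \<longrightarrow> f C \<inter> f D = {}) \<and>
        \<Union> (f ` \<Union> (Cs ` I)) = \<Union> (E ` I)"
    proof (intro exI[of _ F] conjI)
      show "\<forall>C\<in>\<Union> (Cs ` I). inside_8cycle C (F C) \<and> F C \<subseteq> \<Union> (E ` I)"
      proof
        fix C assume "C \<in> \<Union> (Cs ` I)"
        then obtain k where k: "k \<in> I" "C \<in> Cs k" by blast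
        show "inside_8cycle C (F C) \<and> F C \<subseteq> \<Union> (E ` I)"
          unfolding FF[OF k] using f1[OF k] k(1) by blast
      qed
      show "\<forall>C\<in>\<Union> (Cs ` I). \<forall>Da\<in>\<Union> (Cs ` I). C \<noteq> Da \<longrightarrow> F C \<inter> F Da = {}"
      proof (intro ballI impI)
        fix C Da assume "C \<in> \<Union> (Cs ` I)" "Da \<in> \<Union> (Cs ` I)" "C \<noteq> Da"
        then obtain k l where kl: "k \<in> I" "l \<in> I" "C \<in> Cs k" "Da \<in> Cs l" by blast
        show "F C \<inter> F Da = {}"
        proof (cases "k = l")
          case True then show ?thesis using f2[OF kl(1,3)] kl \<open>C \<noteq> Da\<close> FF[OF kl(1,3)] FF[OF kl(2,4)] by simp
        next
          case False then show ?thesis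
            using disj[OF f1(2)[OF kl(1,3)] f1(2)[OF kl(2,4)] kl(1,2)] FF[OF kl(1,3)] FF[OF kl(2,4)] by simp
        qed
      qed
      have eqF: "F ` \<Union> (Cs ` I) = (\<Union>k\<in>I. f k ` Cs k)"
      proof
        show "F ` \<Union> (Cs ` I) \<subseteq> (\<Union>k\<in>I. f k ` Cs k)"
        proof
          fix X assume "X \<in> F ` \<Union> (Cs ` I)"
          then obtain k C where kC: "k \<in> I" "C \<in> Cs k" "X = F C" by blast
          then have "X = f k C" using FF[OF kC(1,2)] by simp
          then show "X \<in> (\<Union>k\<in>I. f k ` Cs k)" using kC(1,2) by blast
        qed
        show "(\<Union>k\<in>I. f k ` Cs k) \<subseteq> F ` \<Union> (Cs ` I)"
        proof
          fix X assume "X \<in> (\<Union>k\<in>I. f k ` Cs k)"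
          then obtain k C where kC: "k \<in> I" "C \<in> Cs k" "X = f k C" by blast
          then have e: "X = F C" using FF[OF kC(1,2)] by simp
          have "C \<in> \<Union> (Cs ` I)" using kC(1,2) by blast
          then show "X \<in> F ` \<Union> (Cs ` I)" by (rule image_eqI[where f=F, OF e])
        qed
      qed
      have "\<Union> (F ` \<Union> (Cs ` I)) = \<Union> (\<Union>k\<in>I. f k ` Cs k)" by (simp only: eqF)
      also have "\<dots> = (\<Union>k\<in>I. \<Union>(f k ` Cs k))" by blast
      also have "\<dots> = (\<Union>k\<in>I. E k)" using f3 by simp
      finally show "\<Union> (F ` \<Union> (Cs ` I)) = \<Union> (E ` I)" .
    qed
  qed
qed
lemma inj_shift: "inj (map_sum ((+) (a::nat)) ((+) (b::nat)))"
proof (rule injI)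
  fix x y assume "map_sum ((+) a) ((+) b) x = map_sum ((+) a) ((+) b) y"
  then show "x = y" by (cases x; cases y) auto
qed

lemma block_eq: "image (image (map_sum ((+) a) ((+) b))) (complete_bipartite m w) =
   {{Inl i, Inr j} | i j. a \<le> i \<and> i < a+m \<and> b \<le> j \<and> j < b+w}"
proof
  show "image (image (map_sum ((+) a) ((+) b))) (complete_bipartite m w) \<subseteq> {{Inl i, Inr j} | i j. a \<le> i \<and> i < a+m \<and> b \<le> j \<and> j < b+w}"
  proof
    fix X assume "X \<in> image (image (map_sum ((+) a) ((+) b))) (complete_bipartite m w)"
    then obtain i j where ij: "X = image (map_sum ((+) a) ((+) b)) {Inl i, Inr j}" "i < m" "j < w"
      unfolding complete_bipartite_def by blast
    then have "X = {Inl (a+i), Inr (b+j)} \<and> a \<le> a+i \<and> a+i < a+m \<and> b \<le> b+j \<and> b+j < b+w" by simp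
    then show "X \<in> {{Inl i, Inr j} | i j. a \<le> i \<and> i < a+m \<and> b \<le> j \<and> j < b+w}" by blast
  qed
  show "{{Inl i, Inr j} | i j. a \<le> i \<and> i < a+m \<and> b \<le> j \<and> j < b+w} \<subseteq> image (image (map_sum ((+) a) ((+) b))) (complete_bipartite m w)"
  proof
    fix x assume "x \<in> {{Inl i, Inr j} | i j. a \<le> i \<and> i < a+m \<and> b \<le> j \<and> j < b+w}"
    then obtain i j where x: "x = {Inl i, Inr j}" "a \<le> i" "i < a+m" "b \<le> j" "j < b+w" by blast
    have "i - a < m" "j - b < w" using x by auto
    then have "{Inl (i-a), Inr (j-b)} \<in> complete_bipartite m w" unfolding complete_bipartite_def by blast
    moreover have "x = image (map_sum ((+) a) ((+) b)) {Inl (i-a), Inr (j-b)}" using x by simp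
    ultimately show "x \<in> image (image (map_sum ((+) a) ((+) b))) (complete_bipartite m w)" by (rule rev_image_eqI)
  qed
qed

lemma block:
  assumes "(w::nat) = 4 \<or> w = 6"
  shows "\<exists>Cs. is_A2P_8cycle_decomp {{Inl i, Inr j} | i j. (a::nat) \<le> i \<and> i < a+4 \<and> (b::nat) \<le> j \<and> j < b+w} Cs"
proof -
  obtain X where X: "is_A2P_8cycle_decomp (complete_bipartite 4 w) X"
  proof (cases "w = 4")
    case True then show ?thesis using K44 that by blast
  next
    case False then have "w = 6" using assms by blast
    then show ?thesis using K46 that by blast
  qed
  have "is_A2P_8cycle_decomp (image (image (map_sum ((+) a) ((+) b))) (complete_bipartite 4 w))
          (image (image (image (map_sum ((+) a) ((+) b)))) X)"
    by (rule A2P_map[OF inj_shift X])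
  then show ?thesis unfolding block_eq by (rule exI)
qed

theorem lemma2p2:
  fixes t s :: nat
  assumes "t \<ge> 1" and "s \<ge> 1"
  shows "\<exists>\<C>. is_A2P_8cycle_decomp (complete_bipartite (4 * t) (4 * s + 2)) \<C>"
proof -
  define w where "w q = (if q = s - 1 then 6 else (4::nat))" for q
  define I where "I = {0..<t} \<times> {0..<s}"
  define E where "E (k::nat\<times>nat) = {{Inl i, Inr j} | i j. 4 * fst k \<le> i \<and> i < 4 * fst k + 4 \<and> 4 * snd k \<le> j \<and> j < 4 * snd k + w (snd k)}" for k
  have "\<forall>k\<in>I. \<exists>Cs. is_A2P_8cycle_decomp (E k) Cs"
    unfolding E_def using block by (simp add: w_def)
  then obtain Cs where Cs: "\<forall>k\<in>I. is_A2P_8cycle_decomp (E k) (Cs k)" by metis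
  have D: "\<forall>k\<in>I. \<forall>l\<in>I. k \<noteq> l \<longrightarrow> E k \<inter> E l = {}"
  proof (intro ballI impI)
    fix k l assume kl: "k \<in> I" "l \<in> I" "k \<noteq> l"
    show "E k \<inter> E l = {}"
    proof (rule ccontr)
      assume "E k \<inter> E l \<noteq> {}"
      then obtain i j i' j' where
        e: "{Inl i, Inr j} = ({Inl i', Inr j'} :: (nat+nat) set)"
        "4 * fst k \<le> i" "i < 4 * fst k + 4" "4 * snd k \<le> j" "j < 4 * snd k + w (snd k)"
        "4 * fst l \<le> i'" "i' < 4 * fst l + 4" "4 * snd l \<le> j'" "j' < 4 * snd l + w (snd l)"
        unfolding E_def by blast
      have "i = i'" "j = j'" using e(1) by (auto simp: doubleton_eq_iff)
      have "snd k < s" "snd l < s" using kl unfolding I_def by auto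
      have "fst k = fst l" using e \<open>i = i'\<close> by linarith
      moreover have "snd k = snd l"
        using e \<open>j = j'\<close> \<open>snd k < s\<close> \<open>snd l < s\<close> unfolding w_def
        by (auto split: if_splits)
      ultimately show False using kl(3) by (simp add: prod_eq_iff)
    qed
  qed
  have U: "(\<Union>k\<in>I. E k) = complete_bipartite (4 * t) (4 * s + 2)"
  proof
    show "(\<Union>k\<in>I. E k) \<subseteq> complete_bipartite (4 * t) (4 * s + 2)"
    proof
      fix x assume "x \<in> (\<Union>k\<in>I. E k)"
      then obtain p q i j where x: "p < t" "q < s" "x = {Inl i, Inr j}" "4 * p \<le> i" "i < 4 * p + 4" "4 * q \<le> j" "j < 4 * q + w q"
        unfolding I_def E_def by auto
      have "i < 4 * t" using x by linarith
      moreover have "j < 4 * s + 2" using x unfolding w_def by (auto split: if_splits)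
      ultimately show "x \<in> complete_bipartite (4 * t) (4 * s + 2)"
        unfolding complete_bipartite_def using x by blast
    qed
    show "complete_bipartite (4 * t) (4 * s + 2) \<subseteq> (\<Union>k\<in>I. E k)"
    proof
      fix x assume "x \<in> complete_bipartite (4 * t) (4 * s + 2)"
      then obtain i j where x: "x = {Inl i, Inr j}" "i < 4 * t" "j < 4 * s + 2"
        unfolding complete_bipartite_def by blast
      define p where "p = i div 4"
      define q where "q = min (j div 4) (s - 1)"
      have pq: "(p, q) \<in> I" unfolding I_def p_def q_def using x assms by auto
      have "4 * p \<le> i" "i < 4 * p + 4" unfolding p_def by auto
      moreover have "4 * q \<le> j" "j < 4 * q + w q"
        unfolding q_def w_def using x assms by (auto simp: min_def)
      ultimately have "x \<in> E (p, q)" unfolding E_def using x by auto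
      then show "x \<in> (\<Union>k\<in>I. E k)" using pq by blast
    qed
  qed
  show ?thesis using A2P_Union[OF Cs D] U by auto
qed
end
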